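(* Let $X,Y$ be infinite dimensional Banach lattices such that (a) $X,Y$ are relatively $s$-decomposable for some $1\le s\le\infty$; (b) $\ell_p$ is finitely lattice representable in $Y_U$; (c) $\ell_q$ is finitely lattice representable in $X_L$. Then $\frac1p\le\frac1q+\frac1s$.
   Context: Banach lattices are real; disjoint means $|x|\wedge|y|=0$. $X,Y$ are relatively $s$-decomposable if there is $D$ with $\|\sum_{i=1}^n y_i\|_Y\le D(\sum_i(\|y_i\|_Y/\|x_i\|_X)^s)^{1/s}\|\sum_{i=1}^n x_i\|_X$ for all $n$ and all pairwise disjoint nonzero $x_i\in X$, pairwise disjoint nonzero $y_i\in Y$ (max for $s=\infty$). $\ell_r$ is finitely lattice representable in a Banach lattice $Z$ if for every $n$ and $\varepsilon>0$ there are pairwise disjoint $z_1,\dots,z_n\in Z$ with $\|a\|_{\ell_r^n}\le\|\sum a_iz_i\|_Z\le(1+\varepsilon)\|a\|_{\ell_r^n}$ for all $a\in\mathbb R^n$. $\mathfrak B_n(X)$ is the set of $n$-tuples of pairwise disjoint norm-one elements. For $a\in\mathbb R^n$: $\|a\|_{Y_U(n)}:=\sup\{\|\sum a_iy_i\|_Y:(y_i)\in\mathfrak B_n(Y)\}$; $\Phi_n(a):=\inf\{\|\sum a_ix_i\|_X:(x_i)\in\mathfrak B_n(X)\}$; $\|a\|_{X_L(n)}:=\inf\{\sum_{k\in F}\Phi_n(a^k):F\text{ finite}, a=\sum_{k\in F}a^k\}$. $Y_U$, $X_L$ are the Banach lattices (coordinate-wise order) of real sequences with $\|a\|_{Y_U}:=\sup_n\|(a_i)_{i\le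 n}\|_{Y_U(n)}<\infty$, resp. $\|a\|_{X_L}:=\sup_n\|(a_i)_{i\le n}\|_{X_L(n)}<\infty$. *)

theory Defs
  imports "HOL-Analysis.Analysis"
begin

text \<open>Banach lattices are modelled as types of sort
  banach + ordered_real_vector + lattice (an ordered real Banach space whose order is a
  lattice, i.e. a Riesz space), together with the lattice-norm axiom.\<close>

definition labs :: "'a::{lattice, uminus} \<Rightarrow> 'a" where
  "labs x = sup x (- x)"

definition banach_lattice :: "'a::{banach, ordered_real_vector, lattice} itself \<Rightarrow> bool" where
  "banach_lattice _ \<longleftrightarrow> (\<forall>x y::'a. labs x \<le> labs y \<longrightarrow> norm x \<le> norm y)"

definition infinite_dimensional :: "'a::real_vector itself \<Rightarrow> bool" where
  "infinite_dimensional _ \<longleftrightarrow> \<not> (\<exists>S::'a set. finite S \<and> span S = UNIV)"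

definition ldisj :: "'a::{lattice, uminus, zero} \<Rightarrow> 'a \<Rightarrow> bool" where
  "ldisj x y \<longleftrightarrow> inf (labs x) (labs y) = 0"

definition lnorm :: "ereal \<Rightarrow> nat \<Rightarrow> (nat \<Rightarrow> real) \<Rightarrow> real" where
  "lnorm r n a = (if r = \<infinity> then Max (insert 0 ((\<lambda>i. \<bar>a i\<bar>) ` {..<n}))
                  else (\<Sum>i<n. \<bar>a i\<bar> powr real_of_ereal r) powr (1 / real_of_ereal r))"

definition rel_decomposable ::
  "'a::{banach, ordered_real_vector, lattice} itself \<Rightarrow> 'b::{banach, ordered_real_vector, lattice} itself
    \<Rightarrow> ereal \<Rightarrow> bool" where
  "rel_decomposable _ _ s \<longleftrightarrow> (\<exists>D::real. \<forall>n. \<forall>x::nat \<Rightarrow> 'a. \<forall>y::nat \<Rightarrow> 'b.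
     (\<forall>i<n. x i \<noteq> 0) \<and> (\<forall>i<n. y i \<noteq> 0) \<and>
     (\<forall>i<n. \<forall>j<n. i \<noteq> j \<longrightarrow> ldisj (x i) (x j)) \<and>
     (\<forall>i<n. \<forall>j<n. i \<noteq> j \<longrightarrow> ldisj (y i) (y j)) \<longrightarrow>
     norm (\<Sum>i<n. y i) \<le> D * lnorm s n (\<lambda>i. norm (y i) / norm (x i)) * norm (\<Sum>i<n. x i))"

definition Bn :: "'a::{banach, ordered_real_vector, lattice} itself \<Rightarrow> nat \<Rightarrow> (nat \<Rightarrow> 'a) set" where
  "Bn _ n = {x. (\<forall>i<n. norm (x i) = 1) \<and> (\<forall>i<n. \<forall>j<n. i \<noteq> j \<longrightarrow> ldisj (x i) (x j))}"

definition YUn :: "'b::{banach, ordered_real_vector, lattice} itself \<Rightarrow> nat \<Rightarrow> (nat \<Rightarrow> real) \<Rightarrow> ereal" where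
  "YUn T n a = (SUP y \<in> Bn T n. ereal (norm (\<Sum>i<n. a i *\<^sub>R y i)))"

definition Phin :: "'a::{banach, ordered_real_vector, lattice} itself \<Rightarrow> nat \<Rightarrow> (nat \<Rightarrow> real) \<Rightarrow> ereal" where
  "Phin T n a = (INF x \<in> Bn T n. ereal (norm (\<Sum>i<n. a i *\<^sub>R x i)))"

definition XLn :: "'a::{banach, ordered_real_vector, lattice} itself \<Rightarrow> nat \<Rightarrow> (nat \<Rightarrow> real) \<Rightarrow> ereal" where
  "XLn T n a = (INF (F, A) \<in> {(F, A). finite F \<and> (\<forall>i<n. a i = (\<Sum>k\<in>F. A k i))}.
                  (\<Sum>k\<in>(F::nat set). Phin T n (A k)))"

text \<open>Norms of the sequence lattices Y_U and X_L (value infinity means "not in the space").\<close>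
definition YU_norm :: "'b::{banach, ordered_real_vector, lattice} itself \<Rightarrow> (nat \<Rightarrow> real) \<Rightarrow> ereal" where
  "YU_norm T a = (SUP n. YUn T n a)"

definition XL_norm :: "'a::{banach, ordered_real_vector, lattice} itself \<Rightarrow> (nat \<Rightarrow> real) \<Rightarrow> ereal" where
  "XL_norm T a = (SUP n. XLn T n a)"

text \<open>l_r is finitely lattice representable in the sequence lattice with (extended) norm N,
  whose elements are the sequences of finite norm, ordered coordinatewise.\<close>
definition fin_lattice_repr :: "ereal \<Rightarrow> ((nat \<Rightarrow> real) \<Rightarrow> ereal) \<Rightarrow> bool" where
  "fin_lattice_repr r N \<longleftrightarrow> (\<forall>n. \<forall>\<epsilon>>0. \<exists>z::nat \<Rightarrow> nat \<Rightarrow> real.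
     (\<forall>i<n. N (z i) < \<infinity>) \<and>
     (\<forall>i<n. \<forall>j<n. i \<noteq> j \<longrightarrow> (\<forall>k. min \<bar>z i k\<bar> \<bar>z j k\<bar> = 0)) \<and>
     (\<forall>a. ereal (lnorm r n a) \<le> N (\<lambda>k. \<Sum>i<n. a i * z i k) \<and>
          N (\<lambda>k. \<Sum>i<n. a i * z i k) \<le> ereal ((1 + \<epsilon>) * lnorm r n a)))"

end

theory Submission imports Defs begin

lemma add_sup_distribL: "(a::'a::{ordered_ab_group_add,lattice}) + sup b c = sup (a + b) (a + c)"
proof (rule antisym)
  have "b \<le> - a + sup (a + b) (a + c)" by (metis add_le_cancel_left add_minus_cancel sup_ge1)
  moreover have "c \<le> - a + sup (a + b) (a + c)" by (metis add_le_cancel_left add_minus_cancel sup_ge2)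
  ultimately have "sup b c \<le> - a + sup (a + b) (a + c)" by simp
  then show "a + sup b c \<le> sup (a + b) (a + c)" by (metis add_le_cancel_left add_minus_cancel)
qed (simp add: add_left_mono)

lemma add_inf_distribL: "(a::'a::{ordered_ab_group_add,lattice}) + inf b c = inf (a + b) (a + c)"
proof (rule antisym)
  have "- a + inf (a + b) (a + c) \<le> b" by (metis add_le_cancel_left add_minus_cancel inf_le1)
  moreover have "- a + inf (a + b) (a + c) \<le> c" by (metis add_le_cancel_left add_minus_cancel inf_le2)
  ultimately have "- a + inf (a + b) (a + c) \<le> inf b c" by simp
  then show "inf (a + b) (a + c) \<le> a + inf b c" by (metis add_le_cancel_left add_minus_cancel)
qed (simp add: add_left_mono)

lemma neg_inf: "- inf a b = sup (- a) (- (b::'a::{ordered_ab_group_add,lattice}))"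
proof (rule antisym)
  show "sup (- a) (- b) \<le> - inf a b" by (simp add: le_infI1 le_infI2)
  have "- sup (- a) (- b) \<le> a" by (simp add: minus_le_iff)
  moreover have "- sup (- a) (- b) \<le> b" by (simp add: minus_le_iff)
  ultimately have "- sup (- a) (- b) \<le> inf a b" by simp
  then show "- inf a b \<le> sup (- a) (- b)" using minus_le_iff by blast
qed

lemma add_eq_sup_inf: "(a::'a::{ordered_ab_group_add,lattice}) + b = sup a b + inf a b"
proof -
  have "sup a b + inf a b = sup a b + (a + b) + inf (- b) (- a)"
  proof -
    have "(a + b) + inf (- b) (- a) = inf a b"
      by (simp add: add_inf_distribL)
    then show ?thesis by (simp add: add.assoc)
  qed
  also have "\<dots> = sup a b + (a + b) - sup a b"
    by (metis diff_conv_add_uminus neg_inf inf_commute minus_minus)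
  finally show ?thesis by simp
qed

lemma labs_ge: "(x::'a::{ordered_ab_group_add,lattice}) \<le> labs x" "- x \<le> labs x"
  by (auto simp: labs_def)

lemma labs_nonneg: "0 \<le> labs (x::'a::{ordered_real_vector,lattice})"
proof -
  let ?s = "labs x"
  have "x + - x \<le> ?s + ?s" using labs_ge[of x] by (rule add_mono)
  then have "0 \<le> ?s + ?s" by simp
  then have "(1/2::real) *\<^sub>R 0 \<le> (1/2::real) *\<^sub>R (?s + ?s)" by (rule scaleR_left_mono) simp
  also have "(1/2::real) *\<^sub>R (?s + ?s) = ?s" by (metis scaleR_half_double)
  finally show ?thesis by simp
qed

lemma labs_minus: "labs (- x) = labs (x::'a::{ordered_ab_group_add,lattice})"
  by (simp add: labs_def sup_commute)

lemma labs_triangle: "labs (x + y) \<le> labs x + labs (y::'a::{ordered_ab_group_add,lattice})"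
proof -
  have "x + y \<le> labs x + labs y" using labs_ge(1)[of x] labs_ge(1)[of y] by (rule add_mono)
  moreover have "- x + - y \<le> labs x + labs y" using labs_ge(2)[of x] labs_ge(2)[of y]
    by (rule add_mono)
  then have "- (x + y) \<le> labs x + labs y" by (simp add: add.commute)
  ultimately show ?thesis by (simp add: labs_def)
qed

lemma scaleR_sup: assumes "0 \<le> c"
  shows "c *\<^sub>R sup x y = sup (c *\<^sub>R x) (c *\<^sub>R (y::'a::{ordered_real_vector,lattice}))"
proof (cases "c = 0")
  case True then show ?thesis by simp
next
  case False
  with assms have c: "0 < c" by simp
  show ?thesis
  proof (rule antisym)
    show "sup (c *\<^sub>R x) (c *\<^sub>R y) \<le> c *\<^sub>R sup x y"
      using assms by (simp add: scaleR_left_mono)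
    have "(1/c) *\<^sub>R (c *\<^sub>R x) \<le> (1/c) *\<^sub>R sup (c *\<^sub>R x) (c *\<^sub>R y)"
      by (rule scaleR_left_mono) (use c in auto)
    then have "x \<le> (1/c) *\<^sub>R sup (c *\<^sub>R x) (c *\<^sub>R y)" using c by simp
    moreover have "(1/c) *\<^sub>R (c *\<^sub>R y) \<le> (1/c) *\<^sub>R sup (c *\<^sub>R x) (c *\<^sub>R y)"
      by (rule scaleR_left_mono) (use c in auto)
    then have "y \<le> (1/c) *\<^sub>R sup (c *\<^sub>R x) (c *\<^sub>R y)" using c by simp
    ultimately have "sup x y \<le> (1/c) *\<^sub>R sup (c *\<^sub>R x) (c *\<^sub>R y)" by simp
    then have "c *\<^sub>R sup x y \<le> c *\<^sub>R ((1/c) *\<^sub>R sup (c *\<^sub>R x) (c *\<^sub>R y))"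
      using assms by (rule scaleR_left_mono)
    then show "c *\<^sub>R sup x y \<le> sup (c *\<^sub>R x) (c *\<^sub>R y)" using c by simp
  qed
qed

lemma scaleR_inf: assumes "0 \<le> c"
  shows "c *\<^sub>R inf x y = inf (c *\<^sub>R x) (c *\<^sub>R (y::'a::{ordered_real_vector,lattice}))"
proof -
  have "c *\<^sub>R inf x y = - (c *\<^sub>R sup (- x) (- y))"
    by (metis neg_inf minus_minus scaleR_minus_right)
  also have "\<dots> = inf (c *\<^sub>R x) (c *\<^sub>R y)"
    using scaleR_sup[OF assms, of "- x" "- y"] neg_inf[of "c *\<^sub>R x" "c *\<^sub>R y"]
    by (metis minus_minus scaleR_minus_right)
  finally show ?thesis .
qed

lemma labs_scaleR: "labs (c *\<^sub>R x) = \<bar>c\<bar> *\<^sub>R labs (x::'a::{ordered_real_vector,lattice})"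
proof (cases "0 \<le> c")
  case True then show ?thesis by (simp add: labs_def scaleR_sup)
next
  case False
  have "labs (c *\<^sub>R x) = labs ((-c) *\<^sub>R (- x))" by simp
  also have "\<dots> = (-c) *\<^sub>R labs (- x)" using False by (simp only: labs_def scaleR_sup) simp
  also have "\<dots> = \<bar>c\<bar> *\<^sub>R labs x" using False by (simp add: labs_minus)
  finally show ?thesis .
qed


lemma inf_add_le:
  fixes a b c :: "'a::{ordered_real_vector,lattice}"
  assumes "0 \<le> a" "0 \<le> b" "0 \<le> c"
  shows "inf a (b + c) \<le> inf a b + inf a c"
proof -
  let ?t = "inf a (b + c)"
  have "?t \<le> b + c" by simp
  then have "?t - c \<le> b" by (simp add: diff_le_eq)
  moreover have "?t - c \<le> a" using assms(3) by (meson diff_le_eq inf_le1 le_add_same_cancel1 order_trans)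
  ultimately have "?t - c \<le> inf a b" by simp
  then have "?t \<le> inf a b + c" by (metis diff_le_eq)
  then have 1: "?t - inf a b \<le> c" by (metis add.commute diff_le_eq)
  have "0 \<le> inf a b" using assms by simp
  then have 2: "?t - inf a b \<le> a" by (meson diff_le_eq inf_le1 le_add_same_cancel1 order_trans)
  from 1 2 have "?t - inf a b \<le> inf a c" by simp
  then show ?thesis by (metis add.commute diff_le_eq)
qed

lemma ldisj_sym: "ldisj x y \<Longrightarrow> ldisj y x"
  by (simp add: ldisj_def inf_commute)

lemma ldisj_zero: "ldisj (x::'a::{ordered_real_vector,lattice}) 0"
  using labs_nonneg[of x] by (simp add: ldisj_def labs_def inf_absorb2)

lemma ldisj_add:
  fixes x y z :: "'a::{ordered_real_vector,lattice}"
  assumes "ldisj x y" "ldisj x z" shows "ldisj x (y + z)"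
proof -
  have "inf (labs x) (labs (y + z)) \<le> inf (labs x) (labs y + labs z)"
    using labs_triangle[of y z] inf_mono by blast
  also have "\<dots> \<le> inf (labs x) (labs y) + inf (labs x) (labs z)"
    by (rule inf_add_le) (auto simp: labs_nonneg)
  also have "\<dots> = 0" using assms by (simp add: ldisj_def)
  finally show ?thesis unfolding ldisj_def
    using labs_nonneg by (metis antisym le_inf_iff)
qed

lemma ldisj_scale:
  fixes x y :: "'a::{ordered_real_vector,lattice}"
  assumes "ldisj x y" shows "ldisj (c *\<^sub>R x) (d *\<^sub>R y)"
proof -
  let ?M = "max \<bar>c\<bar> \<bar>d\<bar>"
  have "inf (labs (c *\<^sub>R x)) (labs (d *\<^sub>R y)) = inf (\<bar>c\<bar> *\<^sub>R labs x) (\<bar>d\<bar> *\<^sub>R labs y)"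
    by (simp add: labs_scaleR)
  also have "\<dots> \<le> inf (?M *\<^sub>R labs x) (?M *\<^sub>R labs y)"
    by (intro inf_mono scaleR_right_mono) (auto simp: labs_nonneg)
  also have "\<dots> = ?M *\<^sub>R inf (labs x) (labs y)" by (simp add: scaleR_inf)
  also have "\<dots> = 0" using assms by (simp add: ldisj_def)
  finally show ?thesis unfolding ldisj_def
    using labs_nonneg by (metis antisym le_inf_iff)
qed

lemma labs_add_disj:
  fixes x y :: "'a::{ordered_real_vector,lattice}"
  assumes "ldisj x y" shows "labs (x + y) = labs x + labs y"
proof (rule antisym)
  show "labs (x + y) \<le> labs x + labs y" by (rule labs_triangle)
  let ?a = "labs x" and ?b = "labs y"
  have ab: "inf ?a ?b = 0" using assms by (simp add: ldisj_def)
  have "?a \<le> labs (x + y) + ?b"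
    using labs_triangle[of "x + y" "- y"] by (simp add: labs_minus)
  then have 1: "?a - ?b \<le> labs (x + y)" by (simp add: diff_le_eq)
  have "?b \<le> labs (x + y) + ?a"
    using labs_triangle[of "x + y" "- x"] by (simp add: labs_minus add.commute)
  then have 2: "?b - ?a \<le> labs (x + y)" by (simp add: diff_le_eq)
  have "sup (?a - ?b) (?b - ?a) = (?a + ?b) + sup (- ?b - ?b) (- ?a - ?a)"
    by (simp add: add_sup_distribL algebra_simps)
  also have "sup (- ?b - ?b) (- ?a - ?a) = - inf (?b + ?b) (?a + ?a)"
    by (simp add: neg_inf)
  also have "inf (?b + ?b) (?a + ?a) = 2 *\<^sub>R inf ?b ?a"
  proof -
    have "(2::real) *\<^sub>R inf ?b ?a = inf (2 *\<^sub>R ?b) (2 *\<^sub>R ?a)" by (rule scaleR_inf) simp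
    then show ?thesis by (simp only: scaleR_2)
  qed
  also have "\<dots> = 0" using ab by (simp add: inf_commute)
  finally have "sup (?a - ?b) (?b - ?a) = ?a + ?b" by simp
  with 1 2 show "labs x + labs y \<le> labs (x + y)" by (metis le_sup_iff order_refl)
qed


definition pdisj :: "('i \<Rightarrow> 'a::{lattice,uminus,zero}) \<Rightarrow> 'i set \<Rightarrow> bool" where
  "pdisj e K \<longleftrightarrow> (\<forall>i\<in>K. \<forall>j\<in>K. i \<noteq> j \<longrightarrow> ldisj (e i) (e j))"

lemma ldisj_sum:
  fixes e :: "'i \<Rightarrow> 'a::{ordered_real_vector,lattice}"
  assumes "finite K" "\<forall>j\<in>K. ldisj x (e j)"
  shows "ldisj x (\<Sum>j\<in>K. e j)"
  using assms by (induction K rule: finite_induct) (simp_all add: ldisj_zero ldisj_add)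

lemma ldisj_sum_sum:
  fixes e :: "'i \<Rightarrow> 'a::{ordered_real_vector,lattice}"
  assumes "finite K1" "finite K2" "\<forall>i\<in>K1. \<forall>j\<in>K2. ldisj (e i) (e j)"
  shows "ldisj (\<Sum>i\<in>K1. e i) (\<Sum>j\<in>K2. e j)"
proof -
  have "\<forall>j\<in>K2. ldisj (\<Sum>i\<in>K1. e i) (e j)"
  proof
    fix j assume "j \<in> K2"
    then have "ldisj (e j) (\<Sum>i\<in>K1. e i)" using assms by (intro ldisj_sum) (auto intro: ldisj_sym)
    then show "ldisj (\<Sum>i\<in>K1. e i) (e j)" by (rule ldisj_sym)
  qed
  then show ?thesis using assms(2) by (intro ldisj_sum)
qed

lemma labs_sum_disj:
  fixes e :: "'i \<Rightarrow> 'a::{ordered_real_vector,lattice}"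
  assumes "finite K" "pdisj e K"
  shows "labs (\<Sum>i\<in>K. e i) = (\<Sum>i\<in>K. labs (e i))"
  using assms
proof (induction K rule: finite_induct)
  case empty then show ?case by (simp add: labs_def)
next
  case (insert i K)
  then have "pdisj e K" by (auto simp: pdisj_def)
  moreover have "ldisj (e i) (\<Sum>j\<in>K. e j)"
    using insert by (intro ldisj_sum) (auto simp: pdisj_def)
  ultimately show ?case using insert by (simp add: labs_add_disj)
qed

lemma norm_subsum:
  fixes e :: "'i \<Rightarrow> 'a::{banach,ordered_real_vector,lattice}"
  assumes bl: "banach_lattice (T::'a itself)" and "finite K" "I \<subseteq> K" "pdisj e K"
  shows "norm (\<Sum>i\<in>I. e i) \<le> norm (\<Sum>i\<in>K. e i)"
proof -
  have fI: "finite I" using assms finite_subset by blast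
  have pI: "pdisj e I" using assms by (auto simp: pdisj_def)
  have "labs (\<Sum>i\<in>I. e i) = (\<Sum>i\<in>I. labs (e i))" by (rule labs_sum_disj[OF fI pI])
  also have "\<dots> \<le> (\<Sum>i\<in>K. labs (e i))"
    by (rule sum_mono2) (use assms in \<open>auto simp: labs_nonneg\<close>)
  also have "\<dots> = labs (\<Sum>i\<in>K. e i)" by (rule labs_sum_disj[symmetric]) (use assms in auto)
  finally show ?thesis using bl unfolding banach_lattice_def by blast
qed

lemma ereal_inv_cases:
  assumes "1 \<le> r"
  obtains "r = \<infinity>" "real_of_ereal (1/r) = 0" "1/r = 0"
  | x where "r = ereal x" "1 \<le> x" "real_of_ereal (1/r) = 1/x" "1/r = ereal (1/x)" "real_of_ereal r = x"
proof (cases r)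
  case (real x)
  then show ?thesis using assms that(2)[of x] by (auto simp: divide_ereal_def inverse_eq_divide)
next
  case PInf then show ?thesis using that(1) by auto
next
  case MInf then show ?thesis using assms by auto
qed

lemma lnorm_nonneg: "0 \<le> lnorm r n a"
  by (auto simp: lnorm_def intro: Max_ge)

lemma lnorm_ones:
  assumes "1 \<le> r" "1 \<le> n"
  shows "lnorm r n (\<lambda>_. 1) = real n powr real_of_ereal (1/r)"
  using assms(1)
proof (cases rule: ereal_inv_cases)
  case 1
  have "0 \<in> {..<n}" using assms by auto
  then have "(\<lambda>i. \<bar>1::real\<bar>) ` {..<n} = {1}" using image_constant[of 0 "{..<n}" "1::real"] by simp
  then show ?thesis using 1 assms by (simp add: lnorm_def)
next
  case (2 x)
  then show ?thesis using assms by (simp add: lnorm_def)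
qed

lemma lnorm_ind:
  assumes "1 \<le> r" "i < n"
  shows "lnorm r n (\<lambda>j. if j = i then 1 else 0) = 1"
  using assms(1)
proof (cases rule: ereal_inv_cases)
  case 1
  have "(\<lambda>j. \<bar>if j = i then 1 else 0::real\<bar>) ` {..<n} \<subseteq> {0, 1}" by auto
  moreover have "1 \<in> (\<lambda>j. \<bar>if j = i then 1 else 0::real\<bar>) ` {..<n}" using assms by force
  ultimately have "insert 0 ((\<lambda>j. \<bar>if j = i then 1 else 0::real\<bar>) ` {..<n}) = {0, 1}" by auto
  then show ?thesis using 1 by (simp add: lnorm_def)
next
  case (2 x)
  have "(\<Sum>j<n. \<bar>if j = i then 1 else 0::real\<bar> powr x) = (\<Sum>j<n. if j = i then 1 else 0)"
    using 2 by (intro sum.cong) auto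
  also have "\<dots> = 1" using assms by simp
  finally show ?thesis using 2 by (simp add: lnorm_def)
qed

lemma lnorm_bound:
  assumes "1 \<le> r" "0 \<le> R" "\<forall>i<n. \<bar>a i\<bar> \<le> R"
  shows "lnorm r n a \<le> real n powr real_of_ereal (1/r) * R"
  using assms(1)
proof (cases rule: ereal_inv_cases)
  case 1
  show ?thesis
  proof (cases "n = 0")
    case True then show ?thesis using 1 by (simp add: lnorm_def)
  next
    case False
    then have "Max (insert 0 ((\<lambda>i. \<bar>a i\<bar>) ` {..<n})) \<le> R"
      using assms by (subst Max_le_iff) auto
    then show ?thesis using 1 False by (simp add: lnorm_def)
  qed
next
  case (2 x)
  have "(\<Sum>i<n. \<bar>a i\<bar> powr x) \<le> (\<Sum>i<n. R powr x)"
    using assms 2 by (intro sum_mono powr_mono2) auto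
  also have "\<dots> = real n * R powr x" by simp
  finally have "(\<Sum>i<n. \<bar>a i\<bar> powr x) powr (1/x) \<le> (real n * R powr x) powr (1/x)"
    using 2 by (intro powr_mono2) (auto intro: sum_nonneg)
  also have "\<dots> = real n powr (1/x) * R" using 2 assms
    by (simp add: powr_mult powr_powr)
  finally show ?thesis using 2 by (simp add: lnorm_def)
qed


lemma Phin_nonneg: "0 \<le> Phin T n a"
  by (auto simp: Phin_def intro: INF_greatest)

lemma pdisj_Bn:
  assumes "x \<in> Bn T N"
  shows "pdisj (\<lambda>k. A k *\<^sub>R x k) {..<N}"
  using assms by (auto simp: Bn_def pdisj_def intro: ldisj_scale)

lemma Phin_mono_n:
  fixes T :: "'a::{banach,ordered_real_vector,lattice} itself"
  assumes bl: "banach_lattice T" and "N1 \<le> N2"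
  shows "Phin T N1 A \<le> Phin T N2 A"
  unfolding Phin_def
proof (rule INF_greatest)
  fix x assume x: "x \<in> Bn T N2"
  then have x1: "x \<in> Bn T N1" using assms by (auto simp: Bn_def)
  have "(INF x\<in>Bn T N1. ereal (norm (\<Sum>i<N1. A i *\<^sub>R x i))) \<le> ereal (norm (\<Sum>i<N1. A i *\<^sub>R x i))"
    using x1 by (rule INF_lower)
  also have "\<dots> \<le> ereal (norm (\<Sum>i<N2. A i *\<^sub>R x i))"
    using norm_subsum[OF bl _ _ pdisj_Bn[OF x], of "{..<N1}"] assms by auto
  finally show "(INF x\<in>Bn T N1. ereal (norm (\<Sum>i<N1. A i *\<^sub>R x i))) \<le> ereal (norm (\<Sum>i<N2. A i *\<^sub>R x i))" .
qed

lemma XLn_mono_n: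
  fixes T :: "'a::{banach,ordered_real_vector,lattice} itself"
  assumes bl: "banach_lattice T" and "N1 \<le> N2"
  shows "XLn T N1 a \<le> XLn T N2 a"
  unfolding XLn_def
proof (rule INF_mono)
  fix FA assume FA: "FA \<in> {(F, A). finite (F::nat set) \<and> (\<forall>i<N2. a i = (\<Sum>k\<in>F. A k i))}"
  obtain F A where FAe: "FA = (F, A)" by fastforce
  have "FA \<in> {(F, A). finite (F::nat set) \<and> (\<forall>i<N1. a i = (\<Sum>k\<in>F. A k i))}"
    using FA assms(2) FAe by auto
  moreover have "(case FA of (F, A) \<Rightarrow> \<Sum>k\<in>(F::nat set). Phin T N1 (A k)) \<le> (case FA of (F, A) \<Rightarrow> \<Sum>k\<in>(F::nat set). Phin T N2 (A k))"
    unfolding FAe using Phin_mono_n[OF assms] by (auto intro: sum_mono)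
  ultimately show "\<exists>n\<in>{(F, A). finite (F::nat set) \<and> (\<forall>i<N1. a i = (\<Sum>k\<in>F. A k i))}.
     (case n of (F, A) \<Rightarrow> \<Sum>k\<in>(F::nat set). Phin T N1 (A k)) \<le> (case FA of (F, A) \<Rightarrow> \<Sum>k\<in>(F::nat set). Phin T N2 (A k))"
    by blast
qed


lemma u_single:
  fixes w :: "nat \<Rightarrow> nat \<Rightarrow> real"
  assumes wd: "\<forall>i<m. \<forall>j<m. i \<noteq> j \<longrightarrow> (\<forall>k. min \<bar>w i k\<bar> \<bar>w j k\<bar> = 0)"
    and i: "i < m" and k: "w i k \<noteq> 0"
  shows "(\<Sum>i'<m. 1 * w i' k) = w i k"
proof -
  have "(\<Sum>i'<m. 1 * w i' k) = (\<Sum>i'<m. if i' = i then w i k else 0)"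
  proof (rule sum.cong)
    fix i' assume "i' \<in> {..<m}"
    then show "1 * w i' k = (if i' = i then w i k else 0)"
      using wd i k by (cases "i' = i") (auto simp: min_def split: if_splits)
  qed simp
  also have "\<dots> = w i k" using i by simp
  finally show ?thesis .
qed

lemma Y_side:
  fixes TY :: "'b::{banach, ordered_real_vector, lattice} itself"
  assumes repr: "fin_lattice_repr p (YU_norm TY)" and p: "1 \<le> p" and m: "1 \<le> m"
  shows "\<exists>v::nat \<Rightarrow> 'b. pdisj v {..<m} \<and> (\<forall>i<m. norm (v i) \<le> 2) \<and>
           real m powr real_of_ereal (1/p) - 1/2 \<le> norm (\<Sum>i<m. v i)"
proof -
  let ?P = "real_of_ereal (1/p)"
  obtain w :: "nat \<Rightarrow> nat \<Rightarrow> real" where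
    wd: "\<forall>i<m. \<forall>j<m. i \<noteq> j \<longrightarrow> (\<forall>k. min \<bar>w i k\<bar> \<bar>w j k\<bar> = 0)" and
    wn: "\<forall>a. ereal (lnorm p m a) \<le> YU_norm TY (\<lambda>k. \<Sum>i<m. a i * w i k) \<and>
             YU_norm TY (\<lambda>k. \<Sum>i<m. a i * w i k) \<le> ereal ((1 + 1) * lnorm p m a)"
    using repr[unfolded fin_lattice_repr_def, rule_format, of 1 m] by auto
  define u where "u = (\<lambda>k. \<Sum>i<m. 1 * w i k)"
  have "ereal (real m powr ?P) \<le> YU_norm TY u"
    using wn[rule_format, of "\<lambda>_. 1"] lnorm_ones[OF p m] by (simp add: u_def)
  then have "ereal (real m powr ?P - 1/2) < (SUP N. YUn TY N u)"
    unfolding YU_norm_def by (rule order_less_le_trans[rotated]) simp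
  then have "\<exists>N. ereal (real m powr ?P - 1/2) < YUn TY N u"
    by (simp add: less_SUP_iff)
  then obtain N where "ereal (real m powr ?P - 1/2) < YUn TY N u" ..
  then have "\<exists>y\<in>Bn TY N. ereal (real m powr ?P - 1/2) < ereal (norm (\<Sum>k<N. u k *\<^sub>R y k))"
    unfolding YUn_def by (simp add: less_SUP_iff)
  then obtain y where y: "y \<in> Bn TY N"
     and yl: "ereal (real m powr ?P - 1/2) < ereal (norm (\<Sum>k<N. u k *\<^sub>R y k))" ..
  define v where "v i = (\<Sum>k<N. w i k *\<^sub>R y k)" for i
  have sumv: "(\<Sum>i<m. v i) = (\<Sum>k<N. u k *\<^sub>R y k)"
    unfolding v_def u_def by (subst sum.swap) (simp add: scaleR_sum_left)
  have nv: "norm (v i) \<le> 2" if i: "i < m" for i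
  proof -
    have ind: "(\<lambda>k. \<Sum>i'<m. (if i' = i then 1 else 0) * w i' k) = w i"
    proof
      fix k
      have "(\<Sum>i'<m. (if i' = i then 1 else 0) * w i' k) = (\<Sum>i'<m. if i' = i then w i k else 0)"
        by (rule sum.cong) auto
      then show "(\<Sum>i'<m. (if i' = i then 1 else 0) * w i' k) = w i k" using i by simp
    qed
    have "ereal (norm (v i)) \<le> YUn TY N (w i)"
      unfolding YUn_def v_def using y by (rule SUP_upper)
    also have "\<dots> \<le> YU_norm TY (w i)"
      unfolding YU_norm_def by (rule SUP_upper) simp
    also have "\<dots> \<le> ereal 2"
      using wn[rule_format, of "\<lambda>j. if j = i then 1 else 0"] lnorm_ind[OF p i] ind by simp
    finally show ?thesis by simp
  qed
  define T where "T i = {k\<in>{..<N}. w i k \<noteq> 0}" for i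
  define g where "g k = u k *\<^sub>R y k" for k
  have vT: "v i = (\<Sum>k\<in>T i. g k)" if i: "i < m" for i
  proof -
    have "v i = (\<Sum>k\<in>T i. w i k *\<^sub>R y k)"
      unfolding v_def T_def by (rule sum.mono_neutral_right) auto
    also have "\<dots> = (\<Sum>k\<in>T i. g k)"
      unfolding g_def u_def using u_single[OF wd i] by (intro sum.cong) (auto simp: T_def)
    finally show ?thesis .
  qed
  have pd: "pdisj v {..<m}"
    unfolding pdisj_def
  proof (intro ballI impI)
    fix i j assume i: "i \<in> {..<m}" and j: "j \<in> {..<m}" and ij: "i \<noteq> j"
    have "ldisj (\<Sum>k\<in>T i. g k) (\<Sum>k\<in>T j. g k)"
    proof (rule ldisj_sum_sum)
      show "finite (T i)" "finite (T j)" by (auto simp: T_def)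
      show "\<forall>k\<in>T i. \<forall>l\<in>T j. ldisj (g k) (g l)"
      proof (intro ballI)
        fix k l assume k: "k \<in> T i" and l: "l \<in> T j"
        have "k \<noteq> l" using k l wd i j ij by (auto simp: T_def min_def split: if_splits)
        then show "ldisj (g k) (g l)" using y k l unfolding g_def
          by (auto simp: Bn_def T_def intro: ldisj_scale)
      qed
    qed
    then show "ldisj (v i) (v j)" using vT i j by simp
  qed
  show ?thesis
    using pd nv yl sumv by (intro exI[of _ v]) auto
qed


lemma sum_ind:
  fixes w :: "nat \<Rightarrow> nat \<Rightarrow> real"
  assumes i: "i < m"
  shows "(\<lambda>k. \<Sum>i'<m. (if i' = i then 1 else 0) * w i' k) = w i"
proof
  fix k
  have "(\<Sum>i'<m. (if i' = i then 1 else 0) * w i' k) = (\<Sum>i'<m. if i' = i then w i k else 0)"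
    by (rule sum.cong) auto
  then show "(\<Sum>i'<m. (if i' = i then 1 else 0) * w i' k) = w i k" using i by simp
qed

lemma X_side:
  fixes TX :: "'a::{banach, ordered_real_vector, lattice} itself"
    and v :: "nat \<Rightarrow> 'b::{banach, ordered_real_vector, lattice}"
  assumes bl: "banach_lattice TX" and repr: "fin_lattice_repr q (XL_norm TX)" and q: "1 \<le> q"
    and s: "1 \<le> s" and D0: "0 \<le> D"
    and Dh: "\<forall>n (x::nat \<Rightarrow> 'a) (y::nat \<Rightarrow> 'b).
      (\<forall>i<n. x i \<noteq> 0) \<and> (\<forall>i<n. y i \<noteq> 0) \<and>
      (\<forall>i<n. \<forall>j<n. i \<noteq> j \<longrightarrow> ldisj (x i) (x j)) \<and>
      (\<forall>i<n. \<forall>j<n. i \<noteq> j \<longrightarrow> ldisj (y i) (y j)) \<longrightarrow>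
      norm (\<Sum>i<n. y i) \<le> D * lnorm s n (\<lambda>i. norm (y i) / norm (x i)) * norm (\<Sum>i<n. x i)"
    and m: "1 \<le> m" and vd: "pdisj v {..<m}" and vn: "\<forall>i<m. norm (v i) \<le> 2"
  shows "norm (\<Sum>i<m. v i) \<le> 4 * D * real m powr real_of_ereal (1/s) * (2 * real m powr real_of_ereal (1/q) + 1)"
proof -
  let ?Q = "real_of_ereal (1/q)" and ?S = "real_of_ereal (1/s)"
  obtain z :: "nat \<Rightarrow> nat \<Rightarrow> real" where
    zd: "\<forall>i<m. \<forall>j<m. i \<noteq> j \<longrightarrow> (\<forall>k. min \<bar>z i k\<bar> \<bar>z j k\<bar> = 0)" and
    zn: "\<forall>a. ereal (lnorm q m a) \<le> XL_norm TX (\<lambda>k. \<Sum>i<m. a i * z i k) \<and>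
             XL_norm TX (\<lambda>k. \<Sum>i<m. a i * z i k) \<le> ereal ((1 + 1) * lnorm q m a)"
    using repr[unfolded fin_lattice_repr_def, rule_format, of 1 m] by auto
  define u where "u = (\<lambda>k. \<Sum>i<m. 1 * z i k)"
  have uX: "XL_norm TX u \<le> ereal (2 * real m powr ?Q)"
    using zn[rule_format, of "\<lambda>_. 1"] lnorm_ones[OF q m] by (simp add: u_def)
  have zX: "ereal 1 \<le> XL_norm TX (z i)" if i: "i < m" for i
    using zn[rule_format, of "\<lambda>j. if j = i then 1 else 0"] lnorm_ind[OF q i] sum_ind[OF i] by simp
  have "\<exists>N. ereal (1/2) < XLn TX N (z i)" if i: "i < m" for i
  proof -
    have "ereal (1/2) < XL_norm TX (z i)" using zX[OF i] by (rule order_less_le_trans[rotated]) simp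
    then show ?thesis unfolding XL_norm_def by (simp add: less_SUP_iff)
  qed
  then obtain Nf where Nf: "\<forall>i<m. ereal (1/2) < XLn TX (Nf i) (z i)" by metis
  define N where "N = Max (Nf ` {..<m})"
  have zN: "ereal (1/2) < XLn TX N (z i)" if i: "i < m" for i
  proof -
    have "Nf i \<le> N" unfolding N_def using i by (intro Max_ge) auto
    then have "XLn TX (Nf i) (z i) \<le> XLn TX N (z i)" by (rule XLn_mono_n[OF bl])
    then show ?thesis using Nf i by (meson order_less_le_trans)
  qed
  have "XLn TX N u \<le> XL_norm TX u" unfolding XL_norm_def by (rule SUP_upper) simp
  also have "\<dots> < ereal (2 * real m powr ?Q + 1/2)" using uX by (rule order_le_less_trans) simp
  finally have "\<exists>FA\<in>{(F, A). finite (F::nat set) \<and> (\<forall>i<N. u i = (\<Sum>k\<in>F. A k i))}.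
      (case FA of (F, A) \<Rightarrow> \<Sum>k\<in>F. Phin TX N (A k)) < ereal (2 * real m powr ?Q + 1/2)"
    unfolding XLn_def by (simp only: INF_less_iff)
  then obtain FA where FA1: "FA\<in>{(F, A). finite (F::nat set) \<and> (\<forall>i<N. u i = (\<Sum>k\<in>F. A k i))}"
    and FA2: "(case FA of (F, A) \<Rightarrow> \<Sum>k\<in>F. Phin TX N (A k)) < ereal (2 * real m powr ?Q + 1/2)" ..
  obtain F A where FAe: "FA = (F, A)" by fastforce
  have F: "finite F" and Au: "\<forall>k<N. u k = (\<Sum>j\<in>F. A j k)"
    using FA1 unfolding FAe by auto
  have Asum: "(\<Sum>j\<in>F. Phin TX N (A j)) < ereal (2 * real m powr ?Q + 1/2)"
    using FA2 unfolding FAe by simp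
  have Pfin: "\<exists>r. Phin TX N (A j) = ereal r" if j: "j \<in> F" for j
  proof -
    have e1: "(\<Sum>j\<in>F. Phin TX N (A j)) = Phin TX N (A j) + (\<Sum>j\<in>F - {j}. Phin TX N (A j))"
      using F j by (rule sum.remove)
    have e2: "0 \<le> (\<Sum>j\<in>F - {j}. Phin TX N (A j))" by (rule sum_nonneg) (simp add: Phin_nonneg)
    have "Phin TX N (A j) \<le> (\<Sum>j\<in>F. Phin TX N (A j))"
      unfolding e1 using e2 by (metis add.right_neutral add_left_mono)
    then have "Phin TX N (A j) < ereal (2 * real m powr ?Q + 1/2)" using Asum by (rule order_le_less_trans)
    then show ?thesis using Phin_nonneg[of TX N "A j"] by (cases "Phin TX N (A j)") auto
  qed
  define ph where "ph j = real_of_ereal (Phin TX N (A j))" for j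
  have phe: "Phin TX N (A j) = ereal (ph j)" if "j \<in> F" for j
    using Pfin[OF that] by (auto simp: ph_def)
  have "(\<Sum>j\<in>F. Phin TX N (A j)) = (\<Sum>j\<in>F. ereal (ph j))"
    using phe by (intro sum.cong) simp_all
  also have "\<dots> = ereal (\<Sum>j\<in>F. ph j)" by simp
  finally have "(\<Sum>j\<in>F. Phin TX N (A j)) = ereal (\<Sum>j\<in>F. ph j)" .
  then have phsum: "(\<Sum>j\<in>F. ph j) < 2 * real m powr ?Q + 1/2" using Asum by simp
  define \<eta> where "\<eta> = 1 / (2 * (real (card F) + 1))"
  have eta: "0 < \<eta>" "real (card F) * \<eta> \<le> 1/2" by (auto simp: \<eta>_def field_simps)
  have "\<exists>x\<in>Bn TX N. norm (\<Sum>k<N. A j k *\<^sub>R x k) < ph j + \<eta>" if j: "j \<in> F" for j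
  proof -
    have "Phin TX N (A j) < ereal (ph j + \<eta>)" using phe[OF j] eta by simp
    then show ?thesis unfolding Phin_def by (simp add: INF_less_iff)
  qed
  then obtain xx where xx: "\<forall>j\<in>F. xx j \<in> Bn TX N \<and> norm (\<Sum>k<N. A j k *\<^sub>R xx j k) < ph j + \<eta>"
    by metis
  define \<Phi> where "\<Phi> j = norm (\<Sum>k<N. A j k *\<^sub>R xx j k)" for j
  have Phisum: "(\<Sum>j\<in>F. \<Phi> j) \<le> 2 * real m powr ?Q + 1"
  proof -
    have "(\<Sum>j\<in>F. \<Phi> j) \<le> (\<Sum>j\<in>F. ph j + \<eta>)"
      using xx by (intro sum_mono) (auto simp: \<Phi>_def less_imp_le)
    also have "\<dots> = (\<Sum>j\<in>F. ph j) + real (card F) * \<eta>" by (simp add: sum.distrib)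
    finally show ?thesis using phsum eta by linarith
  qed
  define S where "S i = {k\<in>{..<N}. z i k \<noteq> 0}" for i
  define e where "e j k = A j k *\<^sub>R xx j k" for j k
  define Xb where "Xb j i = (\<Sum>k\<in>S i. e j k)" for j i
  have Sfin: "finite (S i)" for i by (simp add: S_def)
  have Sdisj: "S i \<inter> S i' = {}" if "i < m" "i' < m" "i \<noteq> i'" for i i'
    using zd that by (auto simp: S_def min_def split: if_splits)
  have ed: "pdisj (e j) {..<N}" if j: "j \<in> F" for j
    unfolding e_def using xx j by (intro pdisj_Bn) auto
  have P1: "pdisj (Xb j) {..<m}" if j: "j \<in> F" for j
    unfolding pdisj_def
  proof (intro ballI impI)
    fix i i' assume i: "i \<in> {..<m}" and i': "i' \<in> {..<m}" and ii: "i \<noteq> i'"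
    show "ldisj (Xb j i) (Xb j i')" unfolding Xb_def
    proof (rule ldisj_sum_sum[OF Sfin Sfin], intro ballI)
      fix k l assume k: "k \<in> S i" and l: "l \<in> S i'"
      have "k \<noteq> l" using Sdisj[of i i'] i i' ii k l by auto
      moreover have "k < N" "l < N" using k l by (auto simp: S_def)
      ultimately show "ldisj (e j k) (e j l)" using ed[OF j] by (auto simp: pdisj_def)
    qed
  qed
  have P2: "norm (\<Sum>i<m. Xb j i) \<le> \<Phi> j" if j: "j \<in> F" for j
  proof -
    have "(\<Sum>i<m. Xb j i) = (\<Sum>k\<in>(\<Union>i\<in>{..<m}. S i). e j k)"
      unfolding Xb_def by (rule sum.UNION_disjoint[symmetric]) (use Sfin Sdisj in auto)
    also have "norm \<dots> \<le> norm (\<Sum>k<N. e j k)"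
      by (rule norm_subsum[OF bl _ _ ed[OF j]]) (auto simp: S_def)
    finally show ?thesis by (simp add: \<Phi>_def e_def)
  qed
  have P3: "1/2 < (\<Sum>j\<in>F. norm (Xb j i))" if i: "i < m" for i
  proof -
    define A' where "A' j k = (if k \<in> S i then A j k else 0)" for j k
    have dec: "(F, A') \<in> {(F, A). finite (F::nat set) \<and> (\<forall>k<N. z i k = (\<Sum>j\<in>F. A j k))}"
    proof -
      have "z i k = (\<Sum>j\<in>F. A' j k)" if k: "k < N" for k
      proof (cases "k \<in> S i")
        case True
        then have "z i k \<noteq> 0" by (simp add: S_def)
        then have "u k = z i k" unfolding u_def by (rule u_single[OF zd i])
        then show ?thesis using Au k True by (simp add: A'_def)
      next
        case False
        then show ?thesis using k by (simp add: A'_def S_def)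
      qed
      then show ?thesis using F by auto
    qed
    have "XLn TX N (z i) \<le> (\<Sum>j\<in>F. Phin TX N (A' j))"
      unfolding XLn_def by (rule INF_lower2[OF dec]) simp
    also have "\<dots> \<le> (\<Sum>j\<in>F. ereal (norm (Xb j i)))"
    proof (rule sum_mono)
      fix j assume j: "j \<in> F"
      have "Phin TX N (A' j) \<le> ereal (norm (\<Sum>k<N. A' j k *\<^sub>R xx j k))"
        unfolding Phin_def using xx j by (intro INF_lower) auto
      also have "(\<Sum>k<N. A' j k *\<^sub>R xx j k) = Xb j i"
        unfolding Xb_def A'_def e_def
        by (rule sum.mono_neutral_cong_right) (auto simp: S_def)
      finally show "Phin TX N (A' j) \<le> ereal (norm (Xb j i))" .
    qed
    also have "\<dots> = ereal (\<Sum>j\<in>F. norm (Xb j i))" by simp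
    finally have "ereal (1/2) < ereal (\<Sum>j\<in>F. norm (Xb j i))" using zN[OF i] by (rule order_less_le_trans[rotated])
    then show ?thesis by simp
  qed
  define c where "c i = (\<Sum>j\<in>F. norm (Xb j i))" for i
  define t where "t j i = norm (Xb j i) / c i" for j i
  have cpos: "1/2 < c i" if "i < m" for i using P3[OF that] by (simp add: c_def)
  have P4: "(\<Sum>i<m. v i) = (\<Sum>j\<in>F. \<Sum>i<m. t j i *\<^sub>R v i)"
  proof -
    have "(\<Sum>j\<in>F. \<Sum>i<m. t j i *\<^sub>R v i) = (\<Sum>i<m. \<Sum>j\<in>F. t j i *\<^sub>R v i)"
      by (rule sum.swap)
    also have "\<dots> = (\<Sum>i<m. v i)"
    proof (rule sum.cong)
      fix i assume i: "i \<in> {..<m}"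
      have "(\<Sum>j\<in>F. t j i) = 1"
        using cpos[of i] i by (simp add: t_def c_def sum_divide_distrib[symmetric])
      then show "(\<Sum>j\<in>F. t j i *\<^sub>R v i) = v i" by (simp add: scaleR_sum_left[symmetric])
    qed simp
    finally show ?thesis by simp
  qed
  have P5: "norm (\<Sum>i<m. t j i *\<^sub>R v i) \<le> D * (real m powr ?S * 4) * \<Phi> j" if j: "j \<in> F" for j
  proof -
    define I where "I = {i\<in>{..<m}. t j i *\<^sub>R v i \<noteq> 0}"
    have If: "finite I" and Im: "I \<subseteq> {..<m}" by (auto simp: I_def)
    obtain idx where bij0: "bij_betw idx {0..<card I} I" using ex_bij_betw_nat_finite[OF If] by blast
    then have bij: "bij_betw idx {..<card I} I" by (simp add: atLeast0LessThan)
    define n where "n = card I"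
    have nm: "n \<le> m" unfolding n_def using card_mono[OF _ Im] by simp
    have idxI: "idx l \<in> I" if "l < n" for l using bij that unfolding n_def by (auto dest: bij_betwE)
    have idxinj: "idx l \<noteq> idx l'" if "l < n" "l' < n" "l \<noteq> l'" for l l'
      using bij that unfolding n_def bij_betw_def inj_on_def by auto
    define x' where "x' l = Xb j (idx l)" for l
    define y' where "y' l = t j (idx l) *\<^sub>R v (idx l)" for l
    have y'nz: "y' l \<noteq> 0" if "l < n" for l using idxI[OF that] by (simp add: I_def y'_def)
    have x'nz: "x' l \<noteq> 0" if "l < n" for l
      using y'nz[OF that] by (auto simp: x'_def y'_def t_def)
    have x'd: "ldisj (x' l) (x' l')" if "l < n" "l' < n" "l \<noteq> l'" for l l'
      using P1[OF j] idxinj[OF that] idxI that Im unfolding x'_def pdisj_def by blast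
    have y'd: "ldisj (y' l) (y' l')" if "l < n" "l' < n" "l \<noteq> l'" for l l'
    proof -
      have "ldisj (v (idx l)) (v (idx l'))"
        using vd idxinj[OF that] idxI that Im unfolding pdisj_def by blast
      then show ?thesis unfolding y'_def by (rule ldisj_scale)
    qed
    have main: "norm (\<Sum>l<n. y' l) \<le> D * lnorm s n (\<lambda>l. norm (y' l) / norm (x' l)) * norm (\<Sum>l<n. x' l)"
      using Dh x'nz y'nz x'd y'd by blast
    have sy: "(\<Sum>l<n. y' l) = (\<Sum>i<m. t j i *\<^sub>R v i)"
    proof -
      have "(\<Sum>l<n. y' l) = (\<Sum>i\<in>I. t j i *\<^sub>R v i)"
        unfolding y'_def n_def by (rule sum.reindex_bij_betw[OF bij])
      also have "\<dots> = (\<Sum>i<m. t j i *\<^sub>R v i)"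
        by (rule sum.mono_neutral_left) (auto simp: I_def)
      finally show ?thesis .
    qed
    have sx: "norm (\<Sum>l<n. x' l) \<le> \<Phi> j"
    proof -
      have "(\<Sum>l<n. x' l) = (\<Sum>i\<in>I. Xb j i)"
        unfolding x'_def n_def by (rule sum.reindex_bij_betw[OF bij])
      then have "norm (\<Sum>l<n. x' l) \<le> norm (\<Sum>i<m. Xb j i)"
        using norm_subsum[OF bl _ Im P1[OF j]] by simp
      then show ?thesis using P2[OF j] by linarith
    qed
    have ratio: "\<bar>norm (y' l) / norm (x' l)\<bar> \<le> 4" if l: "l < n" for l
    proof -
      have il: "idx l < m" using idxI[OF l] Im by auto
      have cp: "1/2 < c (idx l)" by (rule cpos[OF il])
      have nx: "norm (x' l) \<noteq> 0" using x'nz[OF l] by simp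
      have "norm (y' l) / norm (x' l) = norm (v (idx l)) / c (idx l)"
        using nx cp unfolding y'_def x'_def t_def by (simp add: field_simps)
      also have "\<dots> \<le> 2 / (1/2)"
        using vn il cp by (intro frac_le) auto
      finally show ?thesis by simp
    qed
    have ln: "lnorm s n (\<lambda>l. norm (y' l) / norm (x' l)) \<le> real m powr ?S * 4"
    proof -
      have "lnorm s n (\<lambda>l. norm (y' l) / norm (x' l)) \<le> real n powr ?S * 4"
        using ratio by (intro lnorm_bound[OF s]) auto
      also have "real n powr ?S \<le> real m powr ?S"
        using nm s by (intro powr_mono2) (auto elim: ereal_inv_cases)
      finally show ?thesis by simp
    qed
    have "norm (\<Sum>i<m. t j i *\<^sub>R v i) \<le> D * lnorm s n (\<lambda>l. norm (y' l) / norm (x' l)) * norm (\<Sum>l<n. x' l)"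
      using main sy by simp
    also have "\<dots> \<le> D * (real m powr ?S * 4) * \<Phi> j"
      using D0 ln sx by (intro mult_mono) (auto simp: lnorm_nonneg)
    finally show ?thesis .
  qed
  have "norm (\<Sum>i<m. v i) \<le> (\<Sum>j\<in>F. norm (\<Sum>i<m. t j i *\<^sub>R v i))"
    unfolding P4 by (rule norm_sum)
  also have "\<dots> \<le> (\<Sum>j\<in>F. D * (real m powr ?S * 4) * \<Phi> j)"
    by (rule sum_mono) (rule P5)
  also have "\<dots> = D * (real m powr ?S * 4) * (\<Sum>j\<in>F. \<Phi> j)" by (simp add: sum_distrib_left)
  also have "\<dots> \<le> D * (real m powr ?S * 4) * (2 * real m powr ?Q + 1)"
    using D0 Phisum by (intro mult_left_mono) auto
  finally show ?thesis by (simp add: algebra_simps)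
qed


lemma inv_real: assumes "1 \<le> r" shows "1/r = ereal (real_of_ereal (1/r))" "0 \<le> real_of_ereal (1/r)"
  using assms by (cases rule: ereal_inv_cases; simp)+

lemma growth_contra:
  fixes P R K :: real
  assumes K: "0 < K" and key: "\<And>m::nat. 1 \<le> m \<Longrightarrow> real m powr P \<le> K * real m powr R"
  shows "P \<le> R"
proof (rule ccontr)
  assume "\<not> P \<le> R"
  then have d: "0 < P - R" by simp
  define m where "m = nat \<lceil>(K + 1) powr (1 / (P - R))\<rceil> + 1"
  have m1: "1 \<le> m" by (simp add: m_def)
  have "(K + 1) powr (1 / (P - R)) \<le> real m" unfolding m_def by linarith
  then have "((K + 1) powr (1 / (P - R))) powr (P - R) \<le> real m powr (P - R)"
    using d K by (intro powr_mono2) auto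
  then have Km: "K + 1 \<le> real m powr (P - R)" using d K by (simp add: powr_powr)
  have pos: "0 < real m powr R" using m1 by simp
  have "real m powr P = real m powr R * real m powr (P - R)" by (simp add: powr_add[symmetric])
  also have "\<dots> \<ge> real m powr R * (K + 1)" using Km pos by (intro mult_left_mono) auto
  finally have "real m powr R * (K + 1) \<le> real m powr P" .
  moreover have "real m powr P \<le> K * real m powr R" by (rule key[OF m1])
  ultimately show False using pos by (simp add: algebra_simps)
qed

theorem mainTheorem13:
  fixes TX :: "'a::{banach, ordered_real_vector, lattice} itself"
    and TY :: "'b::{banach, ordered_real_vector, lattice} itself"
    and p q s :: ereal
  assumes "banach_lattice TX" and "banach_lattice TY"
    and "infinite_dimensional TX" and "infinite_dimensional TY"
    and "1 \<le> s" and "1 \<le> p" and "1 \<le> q"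
    and "rel_decomposable TX TY s"
    and "fin_lattice_repr p (YU_norm TY)"
    and "fin_lattice_repr q (XL_norm TX)"
  shows "1 / p \<le> 1 / q + 1 / s"
proof -
  note bl = assms(1) and s = assms(5) and p = assms(6) and q = assms(7)
  obtain D0 where D0: "\<forall>n (x::nat \<Rightarrow> 'a) (y::nat \<Rightarrow> 'b).
      (\<forall>i<n. x i \<noteq> 0) \<and> (\<forall>i<n. y i \<noteq> 0) \<and>
      (\<forall>i<n. \<forall>j<n. i \<noteq> j \<longrightarrow> ldisj (x i) (x j)) \<and>
      (\<forall>i<n. \<forall>j<n. i \<noteq> j \<longrightarrow> ldisj (y i) (y j)) \<longrightarrow>
      norm (\<Sum>i<n. y i) \<le> D0 * lnorm s n (\<lambda>i. norm (y i) / norm (x i)) * norm (\<Sum>i<n. x i)"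
    using assms(8) unfolding rel_decomposable_def by blast
  define D where "D = max D0 0"
  have Dnn: "0 \<le> D" by (simp add: D_def)
  have Dh: "\<forall>n (x::nat \<Rightarrow> 'a) (y::nat \<Rightarrow> 'b).
      (\<forall>i<n. x i \<noteq> 0) \<and> (\<forall>i<n. y i \<noteq> 0) \<and>
      (\<forall>i<n. \<forall>j<n. i \<noteq> j \<longrightarrow> ldisj (x i) (x j)) \<and>
      (\<forall>i<n. \<forall>j<n. i \<noteq> j \<longrightarrow> ldisj (y i) (y j)) \<longrightarrow>
      norm (\<Sum>i<n. y i) \<le> D * lnorm s n (\<lambda>i. norm (y i) / norm (x i)) * norm (\<Sum>i<n. x i)"
  proof (intro allI impI)
    fix n and x :: "nat \<Rightarrow> 'a" and y :: "nat \<Rightarrow> 'b"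
    assume h: "(\<forall>i<n. x i \<noteq> 0) \<and> (\<forall>i<n. y i \<noteq> 0) \<and>
      (\<forall>i<n. \<forall>j<n. i \<noteq> j \<longrightarrow> ldisj (x i) (x j)) \<and>
      (\<forall>i<n. \<forall>j<n. i \<noteq> j \<longrightarrow> ldisj (y i) (y j))"
    have "norm (\<Sum>i<n. y i) \<le> D0 * lnorm s n (\<lambda>i. norm (y i) / norm (x i)) * norm (\<Sum>i<n. x i)"
      using D0 h by blast
    also have "\<dots> \<le> D * lnorm s n (\<lambda>i. norm (y i) / norm (x i)) * norm (\<Sum>i<n. x i)"
      by (intro mult_right_mono) (auto simp: D_def lnorm_nonneg)
    finally show "norm (\<Sum>i<n. y i) \<le> D * lnorm s n (\<lambda>i. norm (y i) / norm (x i)) * norm (\<Sum>i<n. x i)" .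
  qed
  define P where "P = real_of_ereal (1/p)"
  define Q where "Q = real_of_ereal (1/q)"
  define S where "S = real_of_ereal (1/s)"
  have P0: "0 \<le> P" and Q0: "0 \<le> Q" and S0: "0 \<le> S"
    using inv_real(2)[OF p] inv_real(2)[OF q] inv_real(2)[OF s] by (auto simp: P_def Q_def S_def)
  have key: "real m powr P \<le> (12 * D + 1) * real m powr (Q + S)" if m: "1 \<le> m" for m :: nat
  proof -
    obtain v :: "nat \<Rightarrow> 'b" where vd: "pdisj v {..<m}" and vn: "\<forall>i<m. norm (v i) \<le> 2"
      and vl: "real m powr P - 1/2 \<le> norm (\<Sum>i<m. v i)"
      using Y_side[OF assms(9) p m] unfolding P_def by blast
    have up: "norm (\<Sum>i<m. v i) \<le> 4 * D * real m powr S * (2 * real m powr Q + 1)"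
      using X_side[OF bl assms(10) q s Dnn Dh m vd vn] unfolding Q_def S_def by blast
    have mQ: "1 \<le> real m powr Q" and mS: "1 \<le> real m powr S"
      using m Q0 S0 by (auto intro: ge_one_powr_ge_zero)
    have "2 * real m powr Q + 1 \<le> 3 * real m powr Q" using mQ by simp
    then have "4 * D * real m powr S * (2 * real m powr Q + 1) \<le> 4 * D * real m powr S * (3 * real m powr Q)"
      using Dnn mS by (intro mult_left_mono) auto
    also have "\<dots> = 12 * D * real m powr (Q + S)" by (simp add: powr_add)
    finally have "real m powr P \<le> 12 * D * real m powr (Q + S) + 1/2" using vl up by linarith
    moreover have "1 \<le> real m powr (Q + S)" using m Q0 S0 by (auto intro: ge_one_powr_ge_zero)
    ultimately show ?thesis by (simp add: algebra_simps)
  qed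
  have "P \<le> Q + S" by (rule growth_contra[OF _ key]) (use Dnn in auto)
  moreover have "1/p = ereal P" "1/q = ereal Q" "1/s = ereal S"
    using inv_real(1)[OF p] inv_real(1)[OF q] inv_real(1)[OF s] by (auto simp: P_def Q_def S_def)
  ultimately show ?thesis by simp
qed

end
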